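(* Let $t(z),d(z)\in\mathbb{C}[[z]]$ with $t^2-4d$ having a simple zero at $z=0$. Let $L_u$ be a free rank-2 module over $\mathbb{C}((z))[[\lambda]]$ with a $\lambda$-connection $\nabla:L_u\to L_u\,dz$ whose reduction $\nabla_0$ on $L_u/\lambda L_u$ satisfies $\operatorname{tr}\nabla_0=t\,dz$, $\det\nabla_0=d\,(dz)^2$, and let $L_0\subset L_u/\lambda L_u$ be a $\mathbb{C}[[z]]$-lattice with $\nabla_0(L_0)\subset L_0\,dz$. Then there exists at most one $\mathbb{C}[[z,\lambda]]$-lattice $L\subset L_u$ such that the image of $L$ in $L_u/\lambda L_u$ is $L_0$ (i.e. $L/\lambda L=L_0$) and $\nabla(L)\subset L\,dz$.
   Context: A $\lambda$-connection on a $\mathbb{C}((z))[[\lambda]]$-module $M$ is a $\mathbb{C}[[\lambda]]$-linear map $\nabla:M\to M\,dz$ with $\nabla(fs)=f\nabla(s)+\lambda s\,df$; its reduction $\nabla_0$ is the induced $\mathbb{C}((z))$-linear map on $M/\lambda M$. A $\mathbb{C}[[z,\lambda]]$-lattice in $L_u$ is a free rank-2 $\mathbb{C}[[z,\lambda]]$-submodule $L$ with $L\otimes_{\mathbb{C}[[z]]}\mathbb{C}((z))=L_u$. *)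

theory Defs
  imports "HOL-Computational_Algebra.Formal_Laurent_Series"
begin

text \<open>C((z))[[lambda]]: formal power series in lambda with Laurent-series coefficients in z.\<close>
type_synonym lser = "complex fls fps"

text \<open>L_u, a free rank-2 module over C((z))[[lambda]], written in a fixed basis.\<close>
type_synonym vecu = "lser \<times> lser"

text \<open>L_u / lambda L_u = C((z))^2.\<close>
type_synonym vec0 = "complex fls \<times> complex fls"

definition vadd :: "vecu \<Rightarrow> vecu \<Rightarrow> vecu" where
  "vadd u v = (fst u + fst v, snd u + snd v)"

definition smul :: "lser \<Rightarrow> vecu \<Rightarrow> vecu" where
  "smul f v = (f * fst v, f * snd v)"

definition dz :: "lser \<Rightarrow> lser" where
  "dz f = Abs_fps (\<lambda>n. fls_deriv (fps_nth f n))"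

definition lam_const :: "complex fps \<Rightarrow> lser" where
  "lam_const c = Abs_fps (\<lambda>n. fls_const (fps_nth c n))"

text \<open>lambda-connection (identifying L_u dz with L_u):
  C[[lambda]]-linear and nabla(f s) = f nabla(s) + lambda s df.\<close>
definition lambda_connection :: "(vecu \<Rightarrow> vecu) \<Rightarrow> bool" where
  "lambda_connection N \<longleftrightarrow>
     (\<forall>u v. N (vadd u v) = vadd (N u) (N v)) \<and>
     (\<forall>c v. N (smul (lam_const c) v) = smul (lam_const c) (N v)) \<and>
     (\<forall>f v. N (smul f v) = vadd (smul f (N v)) (smul (fps_X * dz f) v))"

definition red :: "vecu \<Rightarrow> vec0" where
  "red v = (fps_nth (fst v) 0, fps_nth (snd v) 0)"

definition lift0 :: "vec0 \<Rightarrow> vecu" where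
  "lift0 w = (fps_const (fst w), fps_const (snd w))"

definition nabla0 :: "(vecu \<Rightarrow> vecu) \<Rightarrow> vec0 \<Rightarrow> vec0" where
  "nabla0 N w = red (N (lift0 w))"

definition det2 :: "'a::comm_ring_1 \<times> 'a \<Rightarrow> 'a \<times> 'a \<Rightarrow> 'a" where
  "det2 v w = fst v * snd w - fst w * snd v"

definition tr0 :: "(vecu \<Rightarrow> vecu) \<Rightarrow> complex fls" where
  "tr0 N = fst (nabla0 N (1, 0)) + snd (nabla0 N (0, 1))"

definition det0 :: "(vecu \<Rightarrow> vecu) \<Rightarrow> complex fls" where
  "det0 N = det2 (nabla0 N (1, 0)) (nabla0 N (0, 1))"

text \<open>C[[z]]-lattice in C((z))^2: C[[z]]-span of a C((z))-basis.\<close>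
definition lattice0 :: "vec0 set \<Rightarrow> bool" where
  "lattice0 L0 \<longleftrightarrow> (\<exists>v1 v2. det2 v1 v2 \<noteq> 0 \<and>
     L0 = {(fps_to_fls a * fst v1 + fps_to_fls b * fst v2,
            fps_to_fls a * snd v1 + fps_to_fls b * snd v2) | a b. True})"

text \<open>C[[z,lambda]] as a subring of C((z))[[lambda]].\<close>
definition zlser :: "lser set" where
  "zlser = {r. \<forall>n m. m < 0 \<longrightarrow> fls_nth (fps_nth r n) m = 0}"

text \<open>C[[z,lambda]]-lattice in L_u: C[[z,lambda]]-span of a C((z))[[lambda]]-basis of L_u.\<close>
definition latticeU :: "vecu set \<Rightarrow> bool" where
  "latticeU L \<longleftrightarrow> (\<exists>w1 w2. fps_nth (det2 w1 w2) 0 \<noteq> 0 \<and>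
     L = {vadd (smul a w1) (smul b w2) | a b. a \<in> zlser \<and> b \<in> zlser})"

end

theory Submission
  imports Defs
begin

unbundle fps_syntax

datatype 'a m2 = M2 (e11: 'a) (e12: 'a) (e21: 'a) (e22: 'a)

instantiation m2 :: (comm_ring_1) ring_1
begin
definition "0 = M2 0 0 0 0"
definition "1 = M2 1 0 0 1"
definition "A + B = M2 (e11 A + e11 B) (e12 A + e12 B) (e21 A + e21 B) (e22 A + e22 B)"
definition "A - B = M2 (e11 A - e11 B) (e12 A - e12 B) (e21 A - e21 B) (e22 A - e22 B)"
definition "- A = M2 (- e11 A) (- e12 A) (- e21 A) (- e22 A)"
definition "A * B = M2 (e11 A * e11 B + e12 A * e21 B) (e11 A * e12 B + e12 A * e22 B)
   (e21 A * e11 B + e22 A * e21 B) (e21 A * e12 B + e22 A * e22 B)"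
instance
  by standard (auto simp: zero_m2_def one_m2_def plus_m2_def minus_m2_def uminus_m2_def times_m2_def
     algebra_simps intro: m2.expand)
end

lemma m2_simps [simp]:
  "e11 (A + B) = e11 A + e11 B" "e12 (A + B) = e12 A + e12 B" "e21 (A + B) = e21 A + e21 B" "e22 (A + B) = e22 A + e22 B"
  "e11 (A - B) = e11 A - e11 B" "e12 (A - B) = e12 A - e12 B" "e21 (A - B) = e21 A - e21 B" "e22 (A - B) = e22 A - e22 B"
  "e11 (- A) = - e11 A" "e12 (- A) = - e12 A" "e21 (- A) = - e21 A" "e22 (- A) = - e22 A"
  "e11 (A * B) = e11 A * e11 B + e12 A * e21 B" "e12 (A * B) = e11 A * e12 B + e12 A * e22 B"
  "e21 (A * B) = e21 A * e11 B + e22 A * e21 B" "e22 (A * B) = e21 A * e12 B + e22 A * e22 B"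
  "e11 (0::'a::comm_ring_1 m2) = 0" "e12 (0::'a::comm_ring_1 m2) = 0" "e21 (0::'a::comm_ring_1 m2) = 0" "e22 (0::'a::comm_ring_1 m2) = 0"
  "e11 (1::'a::comm_ring_1 m2) = 1" "e12 (1::'a::comm_ring_1 m2) = 0" "e21 (1::'a::comm_ring_1 m2) = 0" "e22 (1::'a::comm_ring_1 m2) = 1"
  by (simp_all add: zero_m2_def one_m2_def plus_m2_def minus_m2_def uminus_m2_def times_m2_def)

lemma m2_eqI: "e11 A = e11 B \<Longrightarrow> e12 A = e12 B \<Longrightarrow> e21 A = e21 B \<Longrightarrow> e22 A = e22 B \<Longrightarrow> A = B"
  by (cases A; cases B; simp)

definition intf :: "complex fls \<Rightarrow> bool" where
  "intf x \<longleftrightarrow> (\<forall>m<0. x $$ m = 0)"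

lemma intf_iff_sd: "intf x \<longleftrightarrow> 0 \<le> fls_subdegree x"
proof
  assume "intf x" thus "0 \<le> fls_subdegree x"
    unfolding intf_def
    by (metis fls_subdegree_geI fls_zero_subdegree order_refl)
next
  assume "0 \<le> fls_subdegree x" thus "intf x"
    unfolding intf_def by simp
qed

lemma intf_0 [simp]: "intf 0" and intf_1 [simp]: "intf 1"
  by (auto simp: intf_def)

lemma intf_add [simp]: "intf x \<Longrightarrow> intf y \<Longrightarrow> intf (x + y)"
  and intf_diff [simp]: "intf x \<Longrightarrow> intf y \<Longrightarrow> intf (x - y)"
  and intf_uminus [simp]: "intf x \<Longrightarrow> intf (- x)"
  by (auto simp: intf_def)

lemma intf_mult [simp]: "intf x \<Longrightarrow> intf y \<Longrightarrow> intf (x * y)"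
  unfolding intf_iff_sd
  by (cases "x = 0"; cases "y = 0") auto

lemma intf_deriv [simp]: "intf x \<Longrightarrow> intf (fls_deriv x)"
  unfolding intf_def
proof (intro allI impI)
  fix m :: int assume h: "\<forall>m<0. x $$ m = 0" and m: "m < 0"
  show "fls_deriv x $$ m = 0"
  proof (cases "m = -1")
    case True thus ?thesis by simp
  next
    case False thus ?thesis using h m by simp
  qed
qed

lemma intf_const [simp]: "intf (fls_const c)"
  by (simp add: intf_def)

lemma intf_numeral [simp]: "intf (numeral k)"
  by (simp add: intf_def)

lemma intf_fps_to_fls [simp]: "intf (fps_to_fls f)"
  by (simp add: intf_def)

lemma intf_sum [simp]: "(\<And>i. i \<in> A \<Longrightarrow> intf (f i)) \<Longrightarrow> intf (sum f A)"
  by (induction A rule: infinite_finite_induct) auto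

lemma intf_deriv_rev: "intf (fls_deriv x) \<Longrightarrow> intf x"
  unfolding intf_def
proof (intro allI impI)
  fix m :: int assume h: "\<forall>m<0. fls_deriv x $$ m = 0" and m: "m < 0"
  have "of_int ((m-1)+1) * x $$ ((m-1)+1) = 0" using h[rule_format, of "m-1"] m by simp
  thus "x $$ m = 0" using m by simp
qed

lemma intf_half: "intf (2 * x) \<Longrightarrow> intf x"
  unfolding intf_def by simp

lemma intf_inverse: "intf x \<Longrightarrow> x $$ 0 \<noteq> 0 \<Longrightarrow> intf (inverse x)"
proof -
  assume a: "intf x" "x $$ 0 \<noteq> 0"
  hence "fls_subdegree x = 0" 
    by (metis antisym fls_subdegree_leI intf_iff_sd)
  thus ?thesis by (simp add: intf_iff_sd)
qed

definition tr2 :: "'a::comm_ring_1 m2 \<Rightarrow> 'a" where "tr2 A = e11 A + e22 A"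
definition dt2 :: "'a::comm_ring_1 m2 \<Rightarrow> 'a" where "dt2 A = e11 A * e22 A - e12 A * e21 A"
definition sc :: "'a::comm_ring_1 \<Rightarrow> 'a m2" where "sc c = M2 c 0 0 c"
definition dm :: "complex fls m2 \<Rightarrow> complex fls m2" where
  "dm B = M2 (fls_deriv (e11 B)) (fls_deriv (e12 B)) (fls_deriv (e21 B)) (fls_deriv (e22 B))"
definition intM0 :: "complex fls m2 \<Rightarrow> bool" where
  "intM0 B \<longleftrightarrow> intf (e11 B) \<and> intf (e12 B) \<and> intf (e21 B) \<and> intf (e22 B)"

lemma sc_simps [simp]: "e11 (sc c) = c" "e12 (sc c) = 0" "e21 (sc c) = 0" "e22 (sc c) = c"
  by (simp_all add: sc_def)
lemma dm_simps [simp]: "e11 (dm B) = fls_deriv (e11 B)" "e12 (dm B) = fls_deriv (e12 B)"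
  "e21 (dm B) = fls_deriv (e21 B)" "e22 (dm B) = fls_deriv (e22 B)"
  by (simp_all add: dm_def)

lemma intM0_ops [simp]: "intM0 A \<Longrightarrow> intM0 B \<Longrightarrow> intM0 (A + B)"
  "intM0 A \<Longrightarrow> intM0 B \<Longrightarrow> intM0 (A - B)"
  "intM0 A \<Longrightarrow> intM0 B \<Longrightarrow> intM0 (A * B)"
  "intM0 A \<Longrightarrow> intM0 (dm A)" "intf c \<Longrightarrow> intM0 (sc c)" "intM0 0" "intM0 1"
  by (auto simp: intM0_def)

lemma intM0_tr: "intM0 A \<Longrightarrow> intf (tr2 A)"
  by (simp add: intM0_def tr2_def)

lemma beta_lemma:
  fixes \<beta> d :: "complex fls"
  assumes "intf d" "d $$ 0 = 0" "d $$ 1 \<noteq> 0" "intf (2 * fls_deriv \<beta> * d + \<beta> * fls_deriv d)"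
  shows "intf \<beta>"
proof (rule ccontr)
  assume nb: "\<not> intf \<beta>"
  define m where "m = fls_subdegree \<beta>"
  have b0: "\<beta> \<noteq> 0" using nb by auto
  have m: "m < 0" using nb by (simp add: intf_iff_sd m_def)
  have d0: "d \<noteq> 0" using assms(3) by auto
  have sdd: "fls_subdegree d = 1"
  proof (rule antisym)
    show "fls_subdegree d \<le> 1" using assms(3) by (rule fls_subdegree_leI)
    show "1 \<le> fls_subdegree d"
    proof (rule fls_subdegree_geI[OF d0])
      fix k :: int assume "k < 1"
      then consider "k < 0" | "k = 0" by linarith
      thus "d $$ k = 0" using assms(1,2) by cases (auto simp: intf_def)
    qed
  qed
  have sdb': "fls_subdegree (fls_deriv \<beta>) = m - 1"
    using m by (simp add: fls_subdegree_deriv m_def)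
  have db0: "fls_deriv \<beta> \<noteq> 0"
  proof
    assume "fls_deriv \<beta> = 0"
    hence "fls_deriv \<beta> $$ (m - 1) = 0" by simp
    hence "of_int m * \<beta> $$ m = 0" by simp
    thus False using m b0 by (simp add: m_def)
  qed
  have sdd': "fls_subdegree (fls_deriv d) = 0"
  proof (rule antisym)
    show "fls_subdegree (fls_deriv d) \<le> 0"
      by (rule fls_subdegree_leI) (use assms(3) in simp)
    show "0 \<le> fls_subdegree (fls_deriv d)"
      using assms(1) by (simp add: intf_iff_sd[symmetric])
  qed
  have dd0: "fls_deriv d \<noteq> 0" using assms(3)
    by (metis fls_deriv_nth fls_nonzeroI mult_eq_0_iff of_int_eq_0_iff zero_neq_one add_0) 
  have e1: "(fls_deriv \<beta> * d) $$ m = of_int m * \<beta> $$ m * d $$ 1"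
    using fls_times_base[of "fls_deriv \<beta>" d] sdb' sdd by simp
  have e2: "(\<beta> * fls_deriv d) $$ m = \<beta> $$ m * d $$ 1"
    using fls_times_base[of \<beta> "fls_deriv d"] sdd' by (simp add: m_def)
  have "(2 * fls_deriv \<beta> * d + \<beta> * fls_deriv d) $$ m = 0"
    using assms(4) m by (simp add: intf_def)
  hence "2 * (fls_deriv \<beta> * d) $$ m + (\<beta> * fls_deriv d) $$ m = 0"
    by (simp add: mult.assoc)
  hence "(2 * of_int m + 1) * \<beta> $$ m * d $$ 1 = 0"
    unfolding e1 e2 by (simp add: algebra_simps)
  moreover have "(2 * of_int m + 1 :: complex) \<noteq> 0"
  proof
    assume "(2 * of_int m + 1 :: complex) = 0"
    hence "of_int (2 * m + 1) = (0::complex)" by simp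
    hence "2 * m + 1 = 0" by (simp only: of_int_eq_0_iff)
    thus False by presburger
  qed
  ultimately show False using b0 assms(3) by (simp add: m_def)
qed

lemma decomp:
  fixes X N :: "complex fls m2"
  assumes "intf u" "intf v" "intf w" "N = M2 u v w (-u)"
    and "intM0 (X * N - N * X)"
    and "v $$ 0 \<noteq> 0 \<or> w $$ 0 \<noteq> 0"
  shows "\<exists>\<alpha> \<beta> Z. X = sc \<alpha> + sc \<beta> * N + Z \<and> intM0 Z"
proof -
  obtain a b c e where X: "X = M2 a b c e" by (cases X)
  have C: "intf (b * w - v * c)" "intf (v * (a - e) - 2 * u * b)" "intf (2 * u * c - w * (a - e))"
    using assms(5) by (auto simp: X assms(4) intM0_def algebra_simps)
  from assms(6) show ?thesis
  proof
    assume v0: "v $$ 0 \<noteq> 0"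
    hence vn: "v \<noteq> 0" by auto
    define iv where "iv = inverse v"
    have ivv: "v * iv = 1" using vn by (simp add: iv_def)
    have iv: "intf iv" using intf_inverse[OF assms(2) v0] by (simp add: iv_def)
    define \<beta> where "\<beta> = b * iv"
    define \<alpha> where "\<alpha> = a - \<beta> * u"
    define Z where "Z = X - sc \<alpha> - sc \<beta> * N"
    have "e11 Z = 0" "e12 Z = 0" by (simp_all add: Z_def X assms(4) \<alpha>_def \<beta>_def)
      (metis ivv mult.assoc mult.commute mult_1_right)
    moreover have "e21 Z = - (b * w - v * c) * iv"
    proof -
      have "e21 Z = c - b * iv * w" by (simp add: Z_def X assms(4) \<beta>_def)
      also have "\<dots> = - (b * w - v * c) * iv" using ivv by (simp add: algebra_simps)
      finally show ?thesis .
    qed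
    moreover have "e22 Z = - (v * (a - e) - 2 * u * b) * iv"
    proof -
      have "e22 Z = e - a + 2 * b * iv * u" by (simp add: Z_def X assms(4) \<beta>_def \<alpha>_def)
      also have "\<dots> = - (v * (a - e) - 2 * u * b) * iv" using ivv by (simp add: algebra_simps)
      finally show ?thesis .
    qed
    ultimately have "intM0 Z" unfolding intM0_def using C iv by (metis intf_0 intf_mult intf_uminus)
    moreover have "X = sc \<alpha> + sc \<beta> * N + Z" by (simp add: Z_def)
    ultimately show ?thesis by blast
  next
    assume w0: "w $$ 0 \<noteq> 0"
    hence wn: "w \<noteq> 0" by auto
    define iw where "iw = inverse w"
    have iww: "w * iw = 1" using wn by (simp add: iw_def)
    have iw: "intf iw" using intf_inverse[OF assms(3) w0] by (simp add: iw_def)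
    define \<beta> where "\<beta> = c * iw"
    define \<alpha> where "\<alpha> = a - \<beta> * u"
    define Z where "Z = X - sc \<alpha> - sc \<beta> * N"
    have "e11 Z = 0" "e21 Z = 0" by (simp_all add: Z_def X assms(4) \<alpha>_def \<beta>_def)
      (metis iww mult.assoc mult.commute mult_1_right)
    moreover have "e12 Z = (b * w - v * c) * iw"
    proof -
      have "e12 Z = b - c * iw * v" by (simp add: Z_def X assms(4) \<beta>_def)
      also have "\<dots> = (b * w - v * c) * iw" using iww by (simp add: algebra_simps)
      finally show ?thesis .
    qed
    moreover have "e22 Z = (2 * u * c - w * (a - e)) * iw"
    proof -
      have "e22 Z = e - a + 2 * c * iw * u" by (simp add: Z_def X assms(4) \<beta>_def \<alpha>_def)
      also have "\<dots> = (2 * u * c - w * (a - e)) * iw" using iww by (simp add: algebra_simps)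
      finally show ?thesis .
    qed
    ultimately have "intM0 Z" unfolding intM0_def using C iw by (metis intf_0 intf_mult intf_uminus)
    moreover have "X = sc \<alpha> + sc \<beta> * N + Z" by (simp add: Z_def)
    ultimately show ?thesis by blast
  qed
qed

lemma intf_mult_nth01:
  assumes "intf x" "intf y"
  shows "(x * y) $$ 0 = x $$ 0 * y $$ 0" "(x * y) $$ 1 = x $$ 0 * y $$ 1 + x $$ 1 * y $$ 0"
proof -
  have ex: "x = fps_to_fls (fls_regpart x)" using assms(1) by (simp add: intf_iff_sd)
  have ey: "y = fps_to_fls (fls_regpart y)" using assms(2) by (simp add: intf_iff_sd)
  have "x * y = fps_to_fls (fls_regpart x * fls_regpart y)"
    by (subst ex, subst ey, simp add: fls_times_fps_to_fls)
  hence xy: "\<And>n. (x * y) $$ int n = (fls_regpart x * fls_regpart y) $ n" by simp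
  show "(x * y) $$ 0 = x $$ 0 * y $$ 0" using xy[of 0] by simp
  show "(x * y) $$ 1 = x $$ 0 * y $$ 1 + x $$ 1 * y $$ 0" using xy[of 1] by (simp add: fps_mult_nth_1)
qed

lemma identT1:
  fixes P M1 X1 Z :: "complex fls m2" and \<alpha> \<beta> :: "complex fls"
  assumes N: "N = M2 (e11 P - e22 P) (2 * e12 P) (2 * e21 P) (e22 P - e11 P)"
    and X0: "X0 = sc \<alpha> + sc \<beta> * N + Z"
  shows "tr2 (sc 2 * (dm X0 + (X1 * P - P * X1) + (X0 * M1 - M1 * X0) - (if b then (X0 * P - P * X0) * X0 else 0)))
     = 4 * fls_deriv \<alpha> + (2 * tr2 (dm Z) - (if b then tr2 ((Z * N - N * Z) * Z) else 0))"
  using N X0 by (cases P; cases Z; cases X1; cases M1) (simp add: tr2_def algebra_simps)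

lemma identT2:
  fixes P M1 X1 Z :: "complex fls m2" and \<alpha> \<beta> :: "complex fls"
  assumes N: "N = M2 (e11 P - e22 P) (2 * e12 P) (2 * e21 P) (e22 P - e11 P)"
    and X0: "X0 = sc \<alpha> + sc \<beta> * N + Z"
    and d: "d = (e11 P - e22 P)^2 + (2 * e12 P) * (2 * e21 P)"
  shows "tr2 (sc 2 * (dm X0 + (X1 * P - P * X1) + (X0 * M1 - M1 * X0) - (if b then (X0 * P - P * X0) * X0 else 0)) * N)
     = 2 * (2 * fls_deriv \<beta> * d + \<beta> * fls_deriv d) + (2 * tr2 (dm Z * N) + 2 * tr2 (Z * (M1 * N - N * M1))
         - (if b then tr2 ((Z * N - N * Z) * Z * N) else 0))"
  unfolding d using N X0 by (cases P; cases Z; cases X1; cases M1) (simp add: tr2_def algebra_simps power2_eq_square)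

lemma lemmaB:
  fixes P M1 X0 X1 :: "complex fls m2" and d :: "complex fls" and b :: bool
  assumes P: "intM0 P" and M1: "intM0 M1"
    and d: "tr2 P ^ 2 - 4 * dt2 P = d" and d0: "d $$ 0 = 0" and d1: "d $$ 1 \<noteq> 0"
    and C: "intM0 (X0 * P - P * X0)"
    and Y: "intM0 (dm X0 + (X1 * P - P * X1) + (X0 * M1 - M1 * X0) - (if b then (X0 * P - P * X0) * X0 else 0))"
  shows "intM0 X0"
proof -
  define u where "u = e11 P - e22 P"
  define v where "v = 2 * e12 P"
  define w where "w = 2 * e21 P"
  define N where "N = M2 u v w (-u)"
  have N': "N = M2 (e11 P - e22 P) (2 * e12 P) (2 * e21 P) (e22 P - e11 P)"
    by (simp add: N_def u_def v_def w_def)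
  have iu: "intf u" and iv: "intf v" and iw: "intf w"
    using P by (auto simp: intM0_def u_def v_def w_def)
  have dd: "d = (e11 P - e22 P)^2 + (2 * e12 P) * (2 * e21 P)"
    using d[symmetric] by (simp add: tr2_def dt2_def power2_eq_square algebra_simps)
  have dd': "d = u * u + v * w" by (simp add: dd u_def v_def w_def power2_eq_square)
  have CN: "X0 * N - N * X0 = sc 2 * (X0 * P - P * X0)"
    unfolding N' by (intro m2_eqI) (simp_all add: algebra_simps)
  have CNi: "intM0 (X0 * N - N * X0)" unfolding CN using C by simp
  have vw: "v $$ 0 \<noteq> 0 \<or> w $$ 0 \<noteq> 0"
  proof (rule ccontr)
    assume "\<not> (v $$ 0 \<noteq> 0 \<or> w $$ 0 \<noteq> 0)"
    hence v0: "v $$ 0 = 0" and w0: "w $$ 0 = 0" by auto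
    have "d $$ 0 = u $$ 0 * u $$ 0 + v $$ 0 * w $$ 0"
      unfolding dd' by (simp add: intf_mult_nth01 iu iv iw)
    hence u0: "u $$ 0 = 0" using d0 v0 w0 by simp
    have "d $$ 1 = (u $$ 0 * u $$ 1 + u $$ 1 * u $$ 0) + (v $$ 0 * w $$ 1 + v $$ 1 * w $$ 0)"
      unfolding dd' by (simp add: intf_mult_nth01 iu iv iw)
    thus False using d1 u0 v0 w0 by simp
  qed
  obtain \<alpha> \<beta> Z where X0: "X0 = sc \<alpha> + sc \<beta> * N + Z" and Z: "intM0 Z"
    using decomp[OF iu iv iw N_def CNi vw] by blast
  define Y1 where "Y1 = dm X0 + (X1 * P - P * X1) + (X0 * M1 - M1 * X0) - (if b then (X0 * P - P * X0) * X0 else 0)"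
  have iD: "intM0 (sc 2 * Y1)" unfolding Y1_def by (rule intM0_ops(3)[OF intM0_ops(5) Y]) simp
  have iN: "intM0 N" unfolding N_def intM0_def m2.sel using iu iv iw intf_uminus by blast
  have "intf (tr2 (sc 2 * Y1))" using iD by (rule intM0_tr)
  hence "intf (4 * fls_deriv \<alpha> + (2 * tr2 (dm Z) - (if b then tr2 ((Z * N - N * Z) * Z) else 0)))"
    unfolding Y1_def identT1[OF N' X0, of X1 M1 b] .
  moreover have "intf (2 * tr2 (dm Z) - (if b then tr2 ((Z * N - N * Z) * Z) else 0))"
    using Z iN by (simp add: intM0_tr)
  ultimately have "intf (4 * fls_deriv \<alpha> + (2 * tr2 (dm Z) - (if b then tr2 ((Z * N - N * Z) * Z) else 0))
     - (2 * tr2 (dm Z) - (if b then tr2 ((Z * N - N * Z) * Z) else 0)))" by (rule intf_diff)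
  hence "intf (4 * fls_deriv \<alpha>)" by (simp only: add_diff_cancel_right')
  hence "intf (2 * (2 * fls_deriv \<alpha>))" by (simp add: mult.assoc[symmetric])
  hence "intf (2 * fls_deriv \<alpha>)" by (rule intf_half)
  hence "intf (fls_deriv \<alpha>)" by (rule intf_half)
  hence ia: "intf \<alpha>" by (rule intf_deriv_rev)
  have "intf (2 * (2 * fls_deriv \<beta> * d + \<beta> * fls_deriv d) + (2 * tr2 (dm Z * N) + 2 * tr2 (Z * (M1 * N - N * M1))
         - (if b then tr2 ((Z * N - N * Z) * Z * N) else 0)))"
    using intM0_tr[OF intM0_ops(3)[OF iD iN]] unfolding Y1_def identT2[OF N' X0 dd, of X1 M1 b] .
  moreover have "intf (2 * tr2 (dm Z * N) + 2 * tr2 (Z * (M1 * N - N * M1))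
         - (if b then tr2 ((Z * N - N * Z) * Z * N) else 0))"
    using Z iN M1 by (simp add: intM0_tr)
  ultimately have "intf (2 * (2 * fls_deriv \<beta> * d + \<beta> * fls_deriv d) + (2 * tr2 (dm Z * N) + 2 * tr2 (Z * (M1 * N - N * M1))
         - (if b then tr2 ((Z * N - N * Z) * Z * N) else 0)) - (2 * tr2 (dm Z * N) + 2 * tr2 (Z * (M1 * N - N * M1))
         - (if b then tr2 ((Z * N - N * Z) * Z * N) else 0)))" by (rule intf_diff)
  hence "intf (2 * (2 * fls_deriv \<beta> * d + \<beta> * fls_deriv d))" by (simp only: add_diff_cancel_right')
  hence "intf (2 * fls_deriv \<beta> * d + \<beta> * fls_deriv d)" by (rule intf_half)
  moreover have "intf d" unfolding dd' using iu iv iw by simp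
  ultimately have ib: "intf \<beta>" using beta_lemma d0 d1 by blast
  show ?thesis unfolding X0 using ia ib iN Z by simp
qed

definition intR :: "lser \<Rightarrow> bool" where "intR r \<longleftrightarrow> (\<forall>n. intf (r $ n))"
definition intM :: "lser m2 \<Rightarrow> bool" where
  "intM A \<longleftrightarrow> intR (e11 A) \<and> intR (e12 A) \<and> intR (e21 A) \<and> intR (e22 A)"
definition cm :: "nat \<Rightarrow> lser m2 \<Rightarrow> complex fls m2" where
  "cm n A = M2 (e11 A $ n) (e12 A $ n) (e21 A $ n) (e22 A $ n)"
definition dzm :: "lser m2 \<Rightarrow> lser m2" where
  "dzm A = M2 (dz (e11 A)) (dz (e12 A)) (dz (e21 A)) (dz (e22 A))"

lemma zlser_iff: "r \<in> zlser \<longleftrightarrow> intR r"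
  by (simp add: zlser_def intR_def intf_def)

lemma dz_nth [simp]: "dz f $ n = fls_deriv (f $ n)"
  by (simp add: dz_def)

lemma cm_simps [simp]: "e11 (cm n A) = e11 A $ n" "e12 (cm n A) = e12 A $ n"
  "e21 (cm n A) = e21 A $ n" "e22 (cm n A) = e22 A $ n"
  by (simp_all add: cm_def)
lemma dzm_simps [simp]: "e11 (dzm A) = dz (e11 A)" "e12 (dzm A) = dz (e12 A)"
  "e21 (dzm A) = dz (e21 A)" "e22 (dzm A) = dz (e22 A)"
  by (simp_all add: dzm_def)

lemma intR_ops [simp]: "intR 0" "intR 1"
  "intR f \<Longrightarrow> intR g \<Longrightarrow> intR (f + g)"
  "intR f \<Longrightarrow> intR g \<Longrightarrow> intR (f - g)"
  "intR f \<Longrightarrow> intR (- f)"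
  "intR f \<Longrightarrow> intR g \<Longrightarrow> intR (f * g)"
  "intR f \<Longrightarrow> intR (dz f)"
  "intR f \<Longrightarrow> intR (fps_X * f)"
  "intR f \<Longrightarrow> intR (fps_X ^ k * f)"
  unfolding intR_def
  by (auto simp: fps_mult_nth fps_X_power_mult_nth intro!: intf_sum)

lemma intR_Xpow_rev: "intR (fps_X ^ k * f) \<Longrightarrow> intR f"
  unfolding intR_def
proof
  fix n assume "\<forall>n. intf ((fps_X ^ k * f) $ n)"
  hence "intf ((fps_X ^ k * f) $ (n + k))" by blast
  thus "intf (f $ n)" by (simp add: fps_X_power_mult_nth)
qed

lemma dz_add [simp]: "dz (f + g) = dz f + dz g"
  and dz_diff [simp]: "dz (f - g) = dz f - dz g"
  and dz_uminus [simp]: "dz (- f) = - dz f"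
  and dz_0 [simp]: "dz 0 = 0"
  and dz_1 [simp]: "dz 1 = 0"
  by (auto intro!: fps_ext simp: fps_one_nth)

lemma dz_mult [simp]: "dz (f * g) = dz f * g + f * dz g"
  by (rule fps_ext) (simp add: fps_mult_nth fls_deriv_sum sum.distrib)

lemma dz_X [simp]: "dz fps_X = 0"
  by (rule fps_ext) (simp add: fps_X_def)

lemma dz_Xpow [simp]: "dz (fps_X ^ k) = 0"
  by (induction k) simp_all

lemma dzm_ops [simp]: "dzm (A + B) = dzm A + dzm B" "dzm (A - B) = dzm A - dzm B"
  "dzm (A * B) = dzm A * B + A * dzm B" "dzm 1 = 0" "dzm (sc c) = sc (dz c)"
  by (auto intro!: m2_eqI simp: algebra_simps)

lemma intM_ops [simp]: "intM A \<Longrightarrow> intM B \<Longrightarrow> intM (A + B)"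
  "intM A \<Longrightarrow> intM B \<Longrightarrow> intM (A - B)"
  "intM A \<Longrightarrow> intM B \<Longrightarrow> intM (A * B)"
  "intM A \<Longrightarrow> intM (dzm A)" "intR c \<Longrightarrow> intM (sc c)" "intM 0" "intM 1"
  by (auto simp: intM_def)

lemma intM_cm: "intM A \<Longrightarrow> intM0 (cm n A)"
  by (simp add: intM_def intM0_def intR_def)

lemma cm_ops [simp]: "cm n (A + B) = cm n A + cm n B" "cm n (A - B) = cm n A - cm n B"
  "cm 0 (A * B) = cm 0 A * cm 0 B"
  "cm 1 (A * B) = cm 0 A * cm 1 B + cm 1 A * cm 0 B"
  "cm n (dzm A) = dm (cm n A)"
  "cm 0 (1::lser m2) = 1"
  "cm k (sc (fps_X ^ j) * A) = (if k < j then 0 else cm (k - j) A)"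
  "cm 0 (sc fps_X * A) = 0" "cm (Suc k) (sc fps_X * A) = cm k A"
  by (auto intro!: m2_eqI simp: fps_mult_nth_1 fps_X_power_mult_nth)

lemma sc_comm: "sc c * A = A * sc c"
  by (auto intro!: m2_eqI simp: algebra_simps)

lemma sc_mult: "sc a * sc b = sc (a * b)"
  by (auto intro!: m2_eqI)

lemma intM_sc_rev: "intM (sc (fps_X ^ k) * A) \<Longrightarrow> intM A"
  by (auto simp: intM_def intro: intR_Xpow_rev)

lemma sc_0 [simp]: "sc 0 = (0::'a::comm_ring_1 m2)" and sc_1 [simp]: "sc 1 = (1::'a::comm_ring_1 m2)"
  by (auto intro!: m2_eqI)

lemma cm_mult_Suc0 [simp]: "cm (Suc 0) (A * B) = cm 0 A * cm (Suc 0) B + cm (Suc 0) A * cm 0 B"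
  using cm_ops(4) by simp

lemma cm_sc [simp]: "cm n (sc c) = sc (c $ n)"
  by (auto intro!: m2_eqI)

lemma lemmaA:
  fixes M G X V :: "lser m2" and n :: nat and d :: "complex fls"
  assumes n: "n \<ge> 1" and M: "intM M" and G: "intM G"
    and V: "V = 1 + sc (fps_X ^ n) * X"
    and eq: "sc fps_X * dzm V + V * M = G * V"
    and d: "tr2 (cm 0 M) ^ 2 - 4 * dt2 (cm 0 M) = d" and d0: "d $$ 0 = 0" and d1: "d $$ 1 \<noteq> 0"
  shows "intM0 (cm 0 X)"
proof -
  define L where "L = sc (fps_X ^ n :: lser)"
  define l where "l = sc (fps_X :: lser)"
  have Lc: "\<And>A. L * A = A * L" and lc: "\<And>A. l * A = A * l" unfolding L_def l_def by (rule sc_comm)+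
  have dV: "dzm V = L * dzm X" by (simp add: V L_def)
  define Y where "Y = l * dzm X + X * M - G * X"
  have c1: "\<And>A. l * (L * A) = L * (l * A)"
    by (simp add: mult.assoc[symmetric] l_def L_def sc_mult mult.commute)
  have c2: "\<And>A. G * (L * A) = L * (G * A)"
    by (simp only: mult.assoc[symmetric] Lc[of G, symmetric])
  have GM: "G - M = L * Y"
  proof -
    have "l * (L * dzm X) + (1 + L * X) * M = G * (1 + L * X)"
      using eq unfolding dV by (simp add: V L_def l_def)
    hence "l * (L * dzm X) + M + L * X * M = G + G * L * X"
      by (simp add: algebra_simps)
    hence "G - M = l * (L * dzm X) + L * X * M - G * L * X" by (simp add: algebra_simps)
    also have "\<dots> = L * Y"
      unfolding Y_def by (simp add: algebra_simps c1 c2)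
    finally show ?thesis .
  qed
  have iY: "intM Y"
  proof -
    have "intM (L * Y)" unfolding GM[symmetric] using G M by simp
    thus ?thesis unfolding L_def by (rule intM_sc_rev)
  qed
  have Y2: "Y = l * dzm X + (X * M - M * X) - L * (Y * X)"
  proof -
    have GG: "G = M + L * Y" using GM by (simp add: algebra_simps)
    have "Y = l * dzm X + X * M - G * X" by (simp add: Y_def)
    also have "\<dots> = l * dzm X + X * M - (M + L * Y) * X" using GG by simp
    also have "\<dots> = l * dzm X + (X * M - M * X) - L * (Y * X)" by (simp add: algebra_simps)
    finally show ?thesis .
  qed
  have c0: "cm 0 Y = cm 0 X * cm 0 M - cm 0 M * cm 0 X"
    using n by (subst Y2) (simp add: l_def L_def)
  have c1: "cm 1 Y = dm (cm 0 X) + (cm 0 X * cm 1 M + cm 1 X * cm 0 M) - (cm 0 M * cm 1 X + cm 1 M * cm 0 X)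
      - (if n = 1 then cm 0 Y * cm 0 X else 0)"
    using n by (subst Y2) (simp add: l_def L_def)
  have h1: "intM0 (cm 0 X * cm 0 M - cm 0 M * cm 0 X)" using intM_cm[OF iY, of 0] c0 by simp
  have h2: "intM0 (cm 1 Y)" by (rule intM_cm[OF iY])
  have h3: "cm 1 Y = dm (cm 0 X) + (cm 1 X * cm 0 M - cm 0 M * cm 1 X) + (cm 0 X * cm 1 M - cm 1 M * cm 0 X) -
         (if n = 1 then (cm 0 X * cm 0 M - cm 0 M * cm 0 X) * cm 0 X else 0)"
      unfolding c1 c0 by (simp add: algebra_simps)
  show ?thesis
    using lemmaB[of "cm 0 M" "cm 1 M" d "cm 0 X" "cm 1 X" "n = 1"] intM_cm[OF M] d d0 d1 h1 h2 h3
    by simp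
qed

definition vm :: "'a::comm_ring_1 \<times> 'a \<Rightarrow> 'a m2 \<Rightarrow> 'a \<times> 'a" where
  "vm x B = (fst x * e11 B + snd x * e21 B, fst x * e12 B + snd x * e22 B)"
definition mrows :: "'a \<times> 'a \<Rightarrow> 'a \<times> 'a \<Rightarrow> 'a m2" where
  "mrows a b = M2 (fst a) (snd a) (fst b) (snd b)"
definition adjm :: "'a::comm_ring_1 m2 \<Rightarrow> 'a m2" where
  "adjm A = M2 (e22 A) (- e12 A) (- e21 A) (e11 A)"

lemma mrows_sel [simp]: "e11 (mrows a b) = fst a" "e12 (mrows a b) = snd a"
  "e21 (mrows a b) = fst b" "e22 (mrows a b) = snd b"
  by (simp_all add: mrows_def)

lemma vm_mult: "vm x (B * C) = vm (vm x B) C"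
  by (simp add: vm_def algebra_simps)

lemma mrows_vm: "mrows (vm a B) (vm b B) = mrows a b * B"
  by (rule m2_eqI) (simp_all add: vm_def)

lemma vm_1 [simp]: "vm x 1 = x"
  by (simp add: vm_def)

lemma dt2_mult: "dt2 (A * B) = dt2 A * dt2 B"
  by (simp add: dt2_def algebra_simps)

lemma tr2_comm: "tr2 (A * B) = tr2 (B * A)"
  by (simp add: tr2_def algebra_simps)

lemma adjm_mult: "adjm A * A = sc (dt2 A)" "A * adjm A = sc (dt2 A)"
  by (auto intro!: m2_eqI simp: adjm_def dt2_def algebra_simps)

lemma conj_inv:
  fixes P Pi A :: "'a::comm_ring_1 m2"
  assumes "Pi * P = 1"
  shows "tr2 (P * A * Pi) = tr2 A" "dt2 (P * A * Pi) = dt2 A"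
proof -
  show "tr2 (P * A * Pi) = tr2 A"
    by (metis assms mult.assoc mult_1_right tr2_comm)
  have "dt2 Pi * dt2 P = 1" using dt2_mult[of Pi P] assms by (simp add: dt2_def)
  thus "dt2 (P * A * Pi) = dt2 A"
    by (simp add: dt2_mult) (metis mult.commute mult.left_commute mult_1_right)
qed

lemma inv_of_det:
  fixes A :: "'a::comm_ring_1 m2"
  assumes "dt2 A * c = 1"
  shows "A * (adjm A * sc c) = 1" "(adjm A * sc c) * A = 1"
proof -
  show "A * (adjm A * sc c) = 1"
    by (simp add: mult.assoc[symmetric] adjm_mult sc_mult assms)
  have "adjm A * sc c * A = adjm A * A * sc c" by (simp add: mult.assoc sc_comm)
  thus "(adjm A * sc c) * A = 1" by (simp add: adjm_mult sc_mult assms)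
qed

lemma left_inv_right:
  fixes A B :: "'a::comm_ring_1 m2"
  assumes "B * A = 1" shows "A * B = 1"
proof -
  have "dt2 B * dt2 A = 1" using dt2_mult[of B A] assms by (simp add: dt2_def)
  hence h: "dt2 A * dt2 B = 1" by (simp add: mult.commute)
  have "adjm A * sc (dt2 B) = (B * A) * (adjm A * sc (dt2 B))" using assms by simp
  also have "\<dots> = B" using inv_of_det(1)[OF h] by (simp add: mult.assoc)
  finally have "B = adjm A * sc (dt2 B)" by simp
  thus ?thesis using inv_of_det(1)[OF h] by simp
qed

lemma unit_R:
  fixes r :: lser and c :: "complex fls"
  assumes r: "intR r" and c: "intf c" and rc: "r $ 0 * c = 1"
  shows "intR (fps_right_inverse r c)" "r * fps_right_inverse r c = 1"
proof -
  show "r * fps_right_inverse r c = 1" using fps_right_inverse[OF rc] .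
  have "intf (fps_right_inverse_constructor r c k)" for k
  proof (induction k rule: less_induct)
    case (less k)
    show ?case
    proof (cases k)
      case 0 thus ?thesis using c by simp
    next
      case (Suc m)
      have hh: "\<forall>i\<in>{1..k}. intf (r $ i * fps_right_inverse_constructor r c (k - i))"
        using less r Suc by (auto simp: intR_def)
      have eq: "fps_right_inverse_constructor r c k = - c * (\<Sum>i=1..k. r $ i * fps_right_inverse_constructor r c (k - i))"
        unfolding Suc by (rule fps_right_inverse_constructor.simps(2))
      show ?thesis unfolding eq
        by (intro intf_mult intf_uminus c intf_sum) (use less r Suc in \<open>auto simp: intR_def\<close>)
    qed
  qed
  thus "intR (fps_right_inverse r c)" by (simp add: intR_def)
qed

definition truncf :: "nat \<Rightarrow> lser \<Rightarrow> lser" where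
  "truncf n f = Abs_fps (\<lambda>k. if k < n then f $ k else 0)"

lemma truncf_split: "f = truncf n f + fps_X ^ n * fps_shift n f"
  by (rule fps_ext) (simp add: truncf_def fps_X_power_mult_nth)

definition truncm :: "nat \<Rightarrow> lser m2 \<Rightarrow> lser m2" where
  "truncm n A = M2 (truncf n (e11 A)) (truncf n (e12 A)) (truncf n (e21 A)) (truncf n (e22 A))"
definition shiftm :: "nat \<Rightarrow> lser m2 \<Rightarrow> lser m2" where
  "shiftm n A = M2 (fps_shift n (e11 A)) (fps_shift n (e12 A)) (fps_shift n (e21 A)) (fps_shift n (e22 A))"

lemma truncm_split: "A = truncm n A + sc (fps_X ^ n) * shiftm n A"
  by (rule m2_eqI) (simp_all add: truncm_def shiftm_def, (subst truncf_split[of _ n], simp)+)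

lemma cm_shiftm [simp]: "cm 0 (shiftm n A) = cm n A"
  by (rule m2_eqI) (simp_all add: shiftm_def)

lemma cm_truncm: "k < n \<Longrightarrow> cm k (truncm n A) = cm k A"
  by (rule m2_eqI) (simp_all add: truncm_def truncf_def)

lemma intM_truncm: "(\<And>k. k < n \<Longrightarrow> intM0 (cm k A)) \<Longrightarrow> intM (truncm n A)"
  by (auto simp: intM_def intR_def truncm_def truncf_def intM0_def)

lemma intR_X [simp]: "intR fps_X"
  by (simp add: intR_def)

lemma intM_adjm [simp]: "intM A \<Longrightarrow> intM (adjm A)"
  by (simp add: intM_def adjm_def)

lemma intR_dt2 [simp]: "intM A \<Longrightarrow> intR (dt2 A)"
  by (simp add: intM_def dt2_def)

lemma intf_dt2 [simp]: "intM0 A \<Longrightarrow> intf (dt2 A)"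
  by (simp add: intM0_def dt2_def)

lemma dt2_nth0: "dt2 A $ 0 = dt2 (cm 0 A)"
  by (simp add: dt2_def)

lemma cancel_right:
  fixes A B Q Qi :: "'a::comm_ring_1 m2"
  assumes "A * Q = B * Q" "Q * Qi = 1" shows "A = B"
  by (metis assms mult.assoc mult_1_right)

lemma core_step:
  fixes U M G :: "lser m2" and B :: "complex fls m2" and d :: "complex fls" and n :: nat
  assumes n: "n \<ge> 1" and M: "intM M" and G: "intM G"
    and eq: "sc fps_X * dzm U + U * M = G * U"
    and B: "intM0 B" and BU: "B * cm 0 U = 1"
    and disc: "tr2 (cm 0 M) ^ 2 - 4 * dt2 (cm 0 M) = d" and d0: "d $$ 0 = 0" and d1: "d $$ 1 \<noteq> 0"
    and IH: "\<And>k. k < n \<Longrightarrow> intM0 (cm k U)"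
  shows "intM0 (cm n U)"
proof -
  define Q where "Q = truncm n U"
  define S where "S = shiftm n U"
  have US: "U = Q + sc (fps_X ^ n) * S" unfolding Q_def S_def by (rule truncm_split)
  have iQ: "intM Q" unfolding Q_def by (rule intM_truncm) (rule IH)
  have Q0: "cm 0 Q = cm 0 U" unfolding Q_def using n by (simp add: cm_truncm)
  have "dt2 B * dt2 (cm 0 U) = 1" using dt2_mult[of B "cm 0 U"] BU by (simp add: dt2_def)
  hence "dt2 Q $ 0 * dt2 B = 1" by (simp add: dt2_nth0 Q0 mult.commute)
  from unit_R[OF intR_dt2[OF iQ] intf_dt2[OF B] this]
  obtain iq where iq: "intR iq" "dt2 Q * iq = 1" by blast
  define Qi where "Qi = adjm Q * sc iq"
  have QQi: "Q * Qi = 1" and QiQ: "Qi * Q = 1" unfolding Qi_def using inv_of_det[OF iq(2)] by auto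
  have iQi: "intM Qi" unfolding Qi_def using iQ iq by simp
  define Mt where "Mt = (sc fps_X * dzm Q + Q * M) * Qi"
  have iMt: "intM Mt" unfolding Mt_def using iQ iQi M by simp
  define V where "V = U * Qi"
  have V1: "V = 1 + sc (fps_X ^ n) * (S * Qi)"
    unfolding V_def US by (simp add: algebra_simps QQi)
  have UVQ: "U = V * Q" unfolding V_def by (simp add: mult.assoc QiQ)
  have MtQ: "Mt * Q = sc fps_X * dzm Q + Q * M" unfolding Mt_def by (simp add: mult.assoc QiQ)
  have "(sc fps_X * dzm V + V * Mt) * Q = G * V * Q"
  proof -
    have "(sc fps_X * dzm V + V * Mt) * Q = sc fps_X * dzm V * Q + V * (Mt * Q)"
      by (simp add: algebra_simps)
    also have "\<dots> = sc fps_X * (dzm V * Q) + (V * sc fps_X) * dzm Q + V * Q * M"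
      unfolding MtQ by (simp add: algebra_simps)
    also have "\<dots> = sc fps_X * (dzm V * Q + V * dzm Q) + V * Q * M"
      by (simp add: sc_comm[of _ V, symmetric] algebra_simps)
    also have "\<dots> = sc fps_X * dzm U + U * M" unfolding UVQ by simp
    also have "\<dots> = G * V * Q" using eq UVQ by (simp add: mult.assoc)
    finally show ?thesis .
  qed
  hence eqV: "sc fps_X * dzm V + V * Mt = G * V"
    by (rule cancel_right[OF _ QQi])
  have "cm 0 Mt = cm 0 Q * cm 0 M * cm 0 Qi" unfolding Mt_def by simp
  moreover have "cm 0 Qi * cm 0 Q = 1" using arg_cong[OF QiQ, of "cm 0"] by simp
  ultimately have discMt: "tr2 (cm 0 Mt) ^ 2 - 4 * dt2 (cm 0 Mt) = d"
    using conj_inv disc by metis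
  have "intM0 (cm 0 (S * Qi))"
    by (rule lemmaA[OF n iMt G V1 eqV discMt d0 d1])
  hence "intM0 (cm n U * cm 0 Qi)" by (simp add: S_def)
  hence "intM0 (cm n U * cm 0 Qi * cm 0 Q)" using intM_cm[OF iQ] by simp
  moreover have "cm n U * cm 0 Qi * cm 0 Q = cm n U"
    using arg_cong[OF QiQ, of "cm 0"] by (simp add: mult.assoc)
  ultimately show ?thesis by simp
qed

lemma core:
  fixes U M G :: "lser m2" and B :: "complex fls m2" and d :: "complex fls"
  assumes M: "intM M" and G: "intM G"
    and eq: "sc fps_X * dzm U + U * M = G * U"
    and U0: "intM0 (cm 0 U)" and B: "intM0 B" and BU: "B * cm 0 U = 1"
    and disc: "tr2 (cm 0 M) ^ 2 - 4 * dt2 (cm 0 M) = d" and d0: "d $$ 0 = 0" and d1: "d $$ 1 \<noteq> 0"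
  shows "intM U"
proof -
  have "\<forall>k<n. intM0 (cm k U)" for n
  proof (induction n)
    case 0 thus ?case by simp
  next
    case (Suc n)
    show ?case
    proof (cases "n = 0")
      case True thus ?thesis using U0 by simp
    next
      case False
      hence "intM0 (cm n U)"
        using core_step[OF _ M G eq B BU disc d0 d1, of n] Suc by simp
      thus ?thesis using Suc by (auto simp: less_Suc_eq)
    qed
  qed
  hence "\<forall>k. intM0 (cm k U)" by blast
  thus ?thesis by (simp add: intM_def intM0_def intR_def)
qed

definition Amat :: "(vecu \<Rightarrow> vecu) \<Rightarrow> lser m2" where
  "Amat N = M2 (fst (N (1,0))) (snd (N (1,0))) (fst (N (0,1))) (snd (N (0,1)))"

lemma conn_form:
  assumes conn: "lambda_connection N"
  shows "N x = (fst x * e11 (Amat N) + snd x * e21 (Amat N) + fps_X * dz (fst x),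
                fst x * e12 (Amat N) + snd x * e22 (Amat N) + fps_X * dz (snd x))"
proof -
  have add: "\<And>u v. N (vadd u v) = vadd (N u) (N v)"
    and lei: "\<And>f v. N (smul f v) = vadd (smul f (N v)) (smul (fps_X * dz f) v)"
    using conn unfolding lambda_connection_def by blast+
  have x: "x = vadd (smul (fst x) (1,0)) (smul (snd x) (0,1))"
    by (simp add: vadd_def smul_def)
  have "N x = vadd (N (smul (fst x) (1,0))) (N (smul (snd x) (0,1)))"
    by (subst x, rule add)
  also have "\<dots> = (fst x * e11 (Amat N) + snd x * e21 (Amat N) + fps_X * dz (fst x),
                fst x * e12 (Amat N) + snd x * e22 (Amat N) + fps_X * dz (snd x))"
    unfolding lei by (simp add: vadd_def smul_def Amat_def algebra_simps)
  finally show ?thesis .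
qed

lemma N_rows:
  assumes conn: "lambda_connection N"
  shows "mrows (N (e11 Z, e12 Z)) (N (e21 Z, e22 Z)) = sc fps_X * dzm Z + Z * Amat N"
  by (rule m2_eqI) (simp_all add: conn_form[OF conn] algebra_simps)

lemma lat_vm: "vadd (smul a w1) (smul b w2) = vm (a, b) (mrows w1 w2)"
  by (simp add: vadd_def smul_def vm_def)

lemma det2_dt2: "det2 w1 w2 = dt2 (mrows w1 w2)"
  by (simp add: det2_def dt2_def mult.commute)

lemma red_vm: "red (vm x B) = vm (red x) (cm 0 B)"
  by (simp add: red_def vm_def)

lemma mrows_rows [simp]: "(e11 (mrows a b), e12 (mrows a b)) = a" "(e21 (mrows a b), e22 (mrows a b)) = b"
  by simp_all

lemma vm_10 [simp]: "vm (1, 0) B = (e11 B, e12 B)" and vm_01 [simp]: "vm (0, 1) B = (e21 B, e22 B)"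
  by (simp_all add: vm_def)

lemma mrows_10_01: "mrows (1, 0) (0, 1) = 1"
  by (rule m2_eqI) simp_all

lemma latticeU_form:
  assumes "latticeU L"
  obtains W where "dt2 W $ 0 \<noteq> 0" "L = {vm x W | x. intR (fst x) \<and> intR (snd x)}"
proof -
  obtain w1 w2 where w: "fps_nth (det2 w1 w2) 0 \<noteq> 0"
     "L = {vadd (smul a w1) (smul b w2) | a b. a \<in> zlser \<and> b \<in> zlser}"
    using assms unfolding latticeU_def by blast
  have "L = {vm x (mrows w1 w2) | x. intR (fst x) \<and> intR (snd x)}"
    unfolding w(2) lat_vm zlser_iff by force
  with w(1) show ?thesis using that by (simp add: det2_dt2)
qed

lemma invariant_mat:
  assumes conn: "lambda_connection N"
    and L: "L = {vm x W | x. intR (fst x) \<and> intR (snd x)}"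
    and inv: "\<forall>v\<in>L. N v \<in> L"
  obtains M where "intM M" "sc fps_X * dzm W + W * Amat N = M * W"
proof -
  have "(e11 W, e12 W) \<in> L" unfolding L by (rule CollectI, rule exI[of _ "(1,0)"]) simp
  with inv obtain x where x: "N (e11 W, e12 W) = vm x W" "intR (fst x)" "intR (snd x)"
    unfolding L by blast
  have "(e21 W, e22 W) \<in> L" unfolding L by (rule CollectI, rule exI[of _ "(0,1)"]) simp
  with inv obtain y where y: "N (e21 W, e22 W) = vm y W" "intR (fst y)" "intR (snd y)"
    unfolding L by blast
  have "sc fps_X * dzm W + W * Amat N = mrows x y * W"
    unfolding N_rows[OF conn, symmetric] x(1) y(1) by (rule mrows_vm)
  moreover have "intM (mrows x y)" using x y by (simp add: intM_def)
  ultimately show ?thesis using that by blast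
qed

lemma inv_lser:
  fixes W :: "lser m2"
  assumes "dt2 W $ 0 \<noteq> 0"
  obtains Wi where "W * Wi = 1" "Wi * W = 1"
proof -
  have "inverse (dt2 W) * dt2 W = 1" using assms by (rule inverse_mult_eq_1)
  hence "dt2 W * inverse (dt2 W) = 1" by (simp add: mult.commute)
  from inv_of_det[OF this] that show ?thesis by blast
qed

lemma sub_lemma:
  fixes N :: "vecu \<Rightarrow> vecu" and L1 L2 :: "vecu set" and dd :: "complex fls"
  assumes conn: "lambda_connection N"
    and disc: "tr2 (cm 0 (Amat N)) ^ 2 - 4 * dt2 (cm 0 (Amat N)) = dd" and d0: "dd $$ 0 = 0" and d1: "dd $$ 1 \<noteq> 0"
    and L1_lat: "latticeU L1" and L1_inv: "\<forall>v\<in>L1. N v \<in> L1"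
    and L2_lat: "latticeU L2" and L2_inv: "\<forall>v\<in>L2. N v \<in> L2"
    and red: "red ` L1 = red ` L2"
  shows "L2 \<subseteq> L1"
proof -
  obtain W where W0: "dt2 W $ 0 \<noteq> 0" and L1: "L1 = {vm x W | x. intR (fst x) \<and> intR (snd x)}"
    using latticeU_form[OF L1_lat] by blast
  obtain Z where L2: "L2 = {vm x Z | x. intR (fst x) \<and> intR (snd x)}"
    using latticeU_form[OF L2_lat] by blast
  obtain Wi where WWi: "W * Wi = 1" and WiW: "Wi * W = 1" using inv_lser[OF W0] by blast
  obtain M where M: "intM M" and eqW: "sc fps_X * dzm W + W * Amat N = M * W"
    using invariant_mat[OF conn L1 L1_inv] by blast
  obtain G where G: "intM G" and eqZ: "sc fps_X * dzm Z + Z * Amat N = G * Z"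
    using invariant_mat[OF conn L2 L2_inv] by blast
  define U where "U = Z * Wi"
  have ZU: "Z = U * W" unfolding U_def by (simp add: mult.assoc WiW)
  have "(sc fps_X * dzm U + U * M) * W = G * U * W"
  proof -
    have "(sc fps_X * dzm U + U * M) * W = sc fps_X * dzm U * W + U * (M * W)"
      by (simp add: algebra_simps)
    also have "\<dots> = sc fps_X * (dzm U * W) + (U * sc fps_X) * dzm W + U * W * Amat N"
      unfolding eqW[symmetric] by (simp add: algebra_simps)
    also have "\<dots> = sc fps_X * (dzm U * W + U * dzm W) + U * W * Amat N"
      by (simp add: sc_comm[of _ U, symmetric] algebra_simps)
    also have "\<dots> = sc fps_X * dzm Z + Z * Amat N" unfolding ZU by simp
    also have "\<dots> = G * U * W" using eqZ ZU by (simp add: mult.assoc)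
    finally show ?thesis .
  qed
  hence eqU: "sc fps_X * dzm U + U * M = G * U" by (rule cancel_right[OF _ WWi])
  define W0 where "W0 = cm 0 W"
  define W0i where "W0i = cm 0 Wi"
  have W0W0i: "W0 * W0i = 1" unfolding W0_def W0i_def using arg_cong[OF WWi, of "cm 0"] by simp
  have W0iW0: "W0i * W0 = 1" unfolding W0_def W0i_def using arg_cong[OF WiW, of "cm 0"] by simp
  have cancel: "\<And>a b. vm a W0 = vm b W0 \<Longrightarrow> a = b"
    by (metis W0W0i vm_1 vm_mult)
  have U0W0: "cm 0 Z = cm 0 U * W0" unfolding ZU W0_def by simp
  have red1: "red (1::lser, 0::lser) = (1, 0)" "red (0::lser, 1::lser) = (0, 1)" by (simp_all add: red_def)
  have rowU: "intf (fst (vm (red Y) (cm 0 U))) \<and> intf (snd (vm (red Y) (cm 0 U)))"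
    if Y: "intR (fst Y)" "intR (snd Y)" for Y
  proof -
    have "vm Y Z \<in> L2" unfolding L2 using Y by blast
    hence "red (vm Y Z) \<in> red ` L1" unfolding red by (rule imageI)
    then obtain v where v: "v \<in> L1" "red (vm Y Z) = red v" by (auto simp del: red_def)
    then obtain x where x: "intR (fst x)" "intR (snd x)" "v = vm x W" unfolding L1 by blast
    have "vm (vm (red Y) (cm 0 U)) W0 = vm (red x) W0"
      using v(2) unfolding x(3) red_vm U0W0 vm_mult W0_def .
    hence "vm (red Y) (cm 0 U) = red x" by (rule cancel)
    thus ?thesis using x(1,2) by (simp add: red_def intR_def)
  qed
  have U0: "intM0 (cm 0 U)" using rowU[of "(1,0)"] rowU[of "(0,1)"] by (simp add: intM0_def red1)
  have rowB: "\<exists>b. intf (fst b) \<and> intf (snd b) \<and> vm b (cm 0 U) = red Y"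
    if Y: "intR (fst Y)" "intR (snd Y)" for Y
  proof -
    have "vm Y W \<in> L1" unfolding L1 using Y by blast
    hence "red (vm Y W) \<in> red ` L2" unfolding red[symmetric] by (rule imageI)
    then obtain v where v: "v \<in> L2" "red (vm Y W) = red v" by (auto simp del: red_def)
    then obtain x where x: "intR (fst x)" "intR (snd x)" "v = vm x Z" unfolding L2 by blast
    have "vm (red Y) W0 = vm (vm (red x) (cm 0 U)) W0"
      using v(2) unfolding x(3) red_vm U0W0 vm_mult W0_def .
    hence "vm (red x) (cm 0 U) = red Y" by (metis cancel)
    moreover have "intf (fst (red x)) \<and> intf (snd (red x))" using x(1,2) by (simp add: red_def intR_def)
    ultimately show ?thesis by blast
  qed
  obtain b1 where b1: "intf (fst b1)" "intf (snd b1)" "vm b1 (cm 0 U) = (1,0)"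
    using rowB[of "(1,0)"] by (auto simp: red1)
  obtain b2 where b2: "intf (fst b2)" "intf (snd b2)" "vm b2 (cm 0 U) = (0,1)"
    using rowB[of "(0,1)"] by (auto simp: red1)
  define B where "B = mrows b1 b2"
  have iB: "intM0 B" using b1 b2 by (simp add: B_def intM0_def)
  have BU: "B * cm 0 U = 1" unfolding B_def mrows_vm[symmetric] b1(3) b2(3) by (rule mrows_10_01)
  have "cm 0 W * cm 0 (Amat N) = cm 0 M * cm 0 W" using arg_cong[OF eqW, of "cm 0"] by simp
  hence "cm 0 M = W0 * cm 0 (Amat N) * W0i"
    unfolding W0_def[symmetric] by (metis W0W0i mult.assoc mult_1_right)
  hence discM: "tr2 (cm 0 M) ^ 2 - 4 * dt2 (cm 0 M) = dd" using conj_inv[OF W0iW0] disc by simp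
  have iU: "intM U" by (rule core[OF M G eqU U0 iB BU discM d0 d1])
  show ?thesis
  proof
    fix v assume "v \<in> L2"
    then obtain x where x: "v = vm x Z" "intR (fst x)" "intR (snd x)" unfolding L2 by auto
    have "v = vm (vm x U) W" unfolding x(1) ZU vm_mult ..
    moreover have "intR (fst (vm x U))" "intR (snd (vm x U))"
      using x(2,3) iU by (simp_all add: vm_def intM_def)
    ultimately show "v \<in> L1" unfolding L1 by blast
  qed
qed

theorem corollary4p5:
  fixes t d :: "complex fps"
    and N :: "vecu \<Rightarrow> vecu"
    and L0 :: "vec0 set"
    and L1 L2 :: "vecu set"
  assumes simple_zero: "fps_nth (t^2 - 4 * d) 0 = 0" "fps_nth (t^2 - 4 * d) 1 \<noteq> 0"
    and conn: "lambda_connection N"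
    and tr: "tr0 N = fps_to_fls t"
    and det: "det0 N = fps_to_fls d"
    and L0_lat: "lattice0 L0"
    and L0_inv: "\<forall>w\<in>L0. nabla0 N w \<in> L0"
    and L1_lat: "latticeU L1" and L1_red: "red ` L1 = L0" and L1_inv: "\<forall>v\<in>L1. N v \<in> L1"
    and L2_lat: "latticeU L2" and L2_red: "red ` L2 = L0" and L2_inv: "\<forall>v\<in>L2. N v \<in> L2"
  shows "L1 = L2"
proof -
  define dd where "dd = fps_to_fls (t^2 - 4 * d)"
  have trA: "tr2 (cm 0 (Amat N)) = fps_to_fls t"
    using tr by (simp add: tr0_def nabla0_def lift0_def red_def Amat_def tr2_def)
  have detA: "dt2 (cm 0 (Amat N)) = fps_to_fls d"
    using det by (simp add: det0_def nabla0_def lift0_def red_def Amat_def dt2_def det2_def mult.commute)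
  have disc: "tr2 (cm 0 (Amat N)) ^ 2 - 4 * dt2 (cm 0 (Amat N)) = dd"
    unfolding trA detA dd_def by (simp add: fps_to_fls_power fls_times_fps_to_fls)
  have d0: "dd $$ 0 = 0" using simple_zero(1) by (simp add: dd_def)
  have d1: "dd $$ 1 \<noteq> 0" using simple_zero(2) by (simp add: dd_def)
  have "red ` L1 = red ` L2" using L1_red L2_red by simp
  hence "L2 \<subseteq> L1" "L1 \<subseteq> L2"
    using sub_lemma[OF conn disc d0 d1] L1_lat L1_inv L2_lat L2_inv by auto
  thus ?thesis by blast
qed

end
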